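(* $\theta_n(B_n)\asymp\sqrt n$, i.e. there exist constants $c_1,c_2>0$ not depending on $n$ such that $c_1\sqrt n\le\theta_n(B_n)\le c_2\sqrt n$ for all $n\in\mathbb{N}$.
   Context: $B_n=\{x\in\mathbb{R}^n:\|x\|\le1\}$ (Euclidean norm). $C(B_n)$ is the space of continuous real functions on $B_n$ with the max norm; $\Pi_1(\mathbb{R}^n)$ is the set of polynomials in $n$ variables of degree at most $1$. For a nondegenerate simplex $S\subset B_n$ with vertices $x^{(1)},\dots,x^{(n+1)}$, the corresponding interpolation projector $P:C(B_n)\to\Pi_1(\mathbb{R}^n)$ is defined by $Pf(x^{(j)})=f(x^{(j)})$, and $\|P\|_{B_n}$ is its operator norm on $C(B_n)$. $\theta_n(B_n)$ is the minimal value of $\|P\|_{B_n}$ over all nondegenerate simplices with vertices in $B_n$. *)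

theory Defs
  imports Complex_Main
begin

text \<open>Points of R^n are represented as functions nat => real whose coordinates
  with index >= n vanish; the Euclidean norm uses coordinates 0..n-1.\<close>

definition enorm :: "nat \<Rightarrow> (nat \<Rightarrow> real) \<Rightarrow> real" where
  "enorm n x = sqrt (\<Sum>i<n. (x i)\<^sup>2)"

definition unit_ball :: "nat \<Rightarrow> (nat \<Rightarrow> real) set" where
  "unit_ball n = {x. (\<forall>i\<ge>n. x i = 0) \<and> enorm n x \<le> 1}"

definition cont_on_ball :: "nat \<Rightarrow> ((nat \<Rightarrow> real) \<Rightarrow> real) \<Rightarrow> bool" where
  "cont_on_ball n f \<longleftrightarrow>
     (\<forall>x\<in>unit_ball n. \<forall>e>0. \<exists>d>0. \<forall>y\<in>unit_ball n.
        enorm n (\<lambda>i. y i - x i) < d \<longrightarrow> \<bar>f y - f x\<bar> < e)"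

definition supnorm :: "nat \<Rightarrow> ((nat \<Rightarrow> real) \<Rightarrow> real) \<Rightarrow> real" where
  "supnorm n f = Sup ((\<lambda>x. \<bar>f x\<bar>) ` unit_ball n)"

definition poly1 :: "nat \<Rightarrow> ((nat \<Rightarrow> real) \<Rightarrow> real) \<Rightarrow> bool" where
  "poly1 n p \<longleftrightarrow> (\<exists>a0 (a :: nat \<Rightarrow> real). \<forall>x. p x = a0 + (\<Sum>i<n. a i * x i))"

text \<open>A simplex is given by its vertices X 0, ..., X n. Nondegenerate = affinely independent.\<close>
definition nondeg_simplex :: "nat \<Rightarrow> (nat \<Rightarrow> nat \<Rightarrow> real) \<Rightarrow> bool" where
  "nondeg_simplex n X \<longleftrightarrow>
     (\<forall>c :: nat \<Rightarrow> real. (\<Sum>j\<le>n. c j) = 0 \<and> (\<forall>i<n. (\<Sum>j\<le>n. c j * X j i) = 0)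
        \<longrightarrow> (\<forall>j\<le>n. c j = 0))"

definition interp :: "nat \<Rightarrow> (nat \<Rightarrow> nat \<Rightarrow> real) \<Rightarrow> ((nat \<Rightarrow> real) \<Rightarrow> real) \<Rightarrow> ((nat \<Rightarrow> real) \<Rightarrow> real)" where
  "interp n X f = (THE p. poly1 n p \<and> (\<forall>j\<le>n. p (X j) = f (X j)))"

definition proj_norm :: "nat \<Rightarrow> (nat \<Rightarrow> nat \<Rightarrow> real) \<Rightarrow> real" where
  "proj_norm n X = Sup {supnorm n (interp n X f) | f. cont_on_ball n f \<and> supnorm n f \<le> 1}"

definition theta :: "nat \<Rightarrow> real" where
  "theta n = Inf {proj_norm n X | X. (\<forall>j\<le>n. X j \<in> unit_ball n) \<and> nondeg_simplex n X}"

end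

theory Submission imports Defs "HOL-Analysis.Function_Topology" "HOL-Analysis.Elementary_Metric_Spaces" "HOL-Analysis.L2_Norm" "Jordan_Normal_Form.Determinant"
begin

lemma ball_iff: "x \<in> unit_ball n \<longleftrightarrow> (\<forall>i\<ge>n. x i = 0) \<and> (\<Sum>i<n. (x i)\<^sup>2) \<le> 1"
  by (simp add: unit_ball_def enorm_def)

lemma coord_le: assumes "x \<in> unit_ball n" shows "\<bar>x i\<bar> \<le> 1"
proof (cases "i < n")
  case True
  have "(x i)\<^sup>2 \<le> (\<Sum>i<n. (x i)\<^sup>2)"
    by (rule member_le_sum) (use True in auto)
  also have "\<dots> \<le> 1" using assms by (simp add: ball_iff)
  finally show ?thesis by (simp add: abs_square_le_1)
next
  case False then show ?thesis using assms by (simp add: ball_iff)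
qed

lemma enorm_L2: "enorm n x = L2_set x {..<n}"
  by (simp add: enorm_def L2_set_def)

lemma compact_ball: "compact (unit_ball n)"
proof -
  have c: "compact (PiE UNIV (\<lambda>i::nat. {-1..1::real}))"
    using compactin_PiE[of "\<lambda>i. euclidean" UNIV "\<lambda>i::nat. {-1..1::real}"]
    by (simp add: euclidean_product_topology)
  have eq: "unit_ball n = (\<Inter>i\<in>{n..}. {x. x i = 0}) \<inter> {x. (\<Sum>i<n. (x i)\<^sup>2) \<le> 1}"
    by (auto simp: ball_iff)
  have cl: "closed (unit_ball n)"
    unfolding eq
    by (intro closed_Int closed_INT ballI closed_Collect_eq closed_Collect_le continuous_intros
        continuous_on_product_coordinates)
  have sub: "unit_ball n \<subseteq> PiE UNIV (\<lambda>i::nat. {-1..1::real})"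
    using coord_le by (fastforce simp: PiE_iff abs_le_iff)
  have "compact (unit_ball n \<inter> PiE UNIV (\<lambda>i::nat. {-1..1::real}))"
    by (rule closed_Int_compact[OF cl c])
  with sub show ?thesis by (simp add: Int_absorb2)
qed

lemma cont_continuous_on: assumes "cont_on_ball n f" shows "continuous_on (unit_ball n) f"
  unfolding continuous_on_topological
proof (intro ballI allI impI)
  fix x B assume x: "x \<in> unit_ball n" and B: "open B" "f x \<in> B"
  obtain e where e: "e > 0" "ball (f x) e \<subseteq> B" using B openE by blast
  obtain d where d: "d > 0" "\<And>y. y \<in> unit_ball n \<Longrightarrow> enorm n (\<lambda>i. y i - x i) < d \<Longrightarrow> \<bar>f y - f x\<bar> < e"
    using assms x e(1) unfolding cont_on_ball_def by blast
  define r where "r = d / (real n + 1)"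
  have r: "r > 0" using d by (simp add: r_def)
  define A where "A = {y. \<forall>i\<in>{..<n}. y ((\<lambda>i. i) i) \<in> ball (x i) r}"
  have "open A" unfolding A_def
    by (rule product_topology_basis') auto
  moreover have "x \<in> A" using r by (simp add: A_def)
  moreover have "f y \<in> B" if y: "y \<in> unit_ball n" "y \<in> A" for y
  proof -
    have "enorm n (\<lambda>i. y i - x i) \<le> (\<Sum>i<n. \<bar>y i - x i\<bar>)"
      unfolding enorm_L2 by (rule L2_set_le_sum_abs)
    also have "\<dots> \<le> (\<Sum>i<n. r)"
      using y(2) by (intro sum_mono) (auto simp: A_def dist_real_def abs_minus_commute less_imp_le)
    also have "\<dots> = real n * r" by simp
    also have "\<dots> < d" using d(1) by (simp add: r_def field_simps)
    finally have "\<bar>f y - f x\<bar> < e" using d(2)[OF y(1)] by simp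
    then show ?thesis using e(2) by (auto simp: dist_real_def abs_minus_commute)
  qed
  ultimately show "\<exists>A. open A \<and> x \<in> A \<and> (\<forall>y\<in>unit_ball n. y \<in> A \<longrightarrow> f y \<in> B)" by blast
qed

lemma cont_bdd: assumes "cont_on_ball n f" shows "bdd_above ((\<lambda>x. \<bar>f x\<bar>) ` unit_ball n)"
proof -
  have "compact (f ` unit_ball n)"
    by (rule compact_continuous_image[OF cont_continuous_on[OF assms] compact_ball])
  then obtain a where "\<forall>y\<in>f ` unit_ball n. \<bar>y\<bar> \<le> a"
    using compact_imp_bounded bounded_real by blast
  then show ?thesis by (auto intro!: bdd_aboveI2)
qed

lemma cont_le_supnorm: "cont_on_ball n f \<Longrightarrow> x \<in> unit_ball n \<Longrightarrow> \<bar>f x\<bar> \<le> supnorm n f"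
  unfolding supnorm_def by (rule cSup_upper) (auto intro: cont_bdd)

definition Mx :: "nat \<Rightarrow> (nat \<Rightarrow> nat \<Rightarrow> real) \<Rightarrow> real mat" where
  "Mx n X = mat (Suc n) (Suc n) (\<lambda>(j,k). if k = 0 then 1 else X j (k - 1))"

lemma Mx_carrier: "Mx n X \<in> carrier_mat (Suc n) (Suc n)"
  by (simp add: Mx_def)

lemma Mx_mult: assumes "w \<in> carrier_vec (Suc n)" "j \<le> n"
  shows "(Mx n X *\<^sub>v w) $ j = w $ 0 + (\<Sum>i<n. w $ (Suc i) * X j i)"
proof -
  have "(Mx n X *\<^sub>v w) $ j = (\<Sum>k<Suc n. (if k = 0 then 1 else X j (k - 1)) * w $ k)"
    using assms by (simp add: Mx_def scalar_prod_def atLeast0LessThan)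
  also have "\<dots> = w $ 0 + (\<Sum>i<n. w $ (Suc i) * X j i)"
    by (subst sum.lessThan_Suc_shift) (simp add: mult.commute)
  finally show ?thesis .
qed

lemma MxT_mult: assumes "w \<in> carrier_vec (Suc n)" "k \<le> n"
  shows "(transpose_mat (Mx n X) *\<^sub>v w) $ k = (\<Sum>j\<le>n. (if k = 0 then 1 else X j (k - 1)) * w $ j)"
  using assms by (simp add: Mx_def scalar_prod_def atLeast0LessThan lessThan_Suc_atMost)

lemma nondeg_det: assumes nd: "nondeg_simplex n X" shows "det (Mx n X) \<noteq> 0"
proof
  assume "det (Mx n X) = 0"
  then have "det (transpose_mat (Mx n X)) = 0" by (simp add: det_transpose[OF Mx_carrier])
  then obtain v where v: "v \<in> carrier_vec (Suc n)" "v \<noteq> 0\<^sub>v (Suc n)"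
      "transpose_mat (Mx n X) *\<^sub>v v = 0\<^sub>v (Suc n)"
    using det_0_iff_vec_prod_zero[of "transpose_mat (Mx n X)" "Suc n"] Mx_carrier by auto
  define c where "c j = v $ j" for j
  have "(transpose_mat (Mx n X) *\<^sub>v v) $ 0 = 0" using v(3) by simp
  then have s0: "(\<Sum>j\<le>n. c j) = 0" using MxT_mult[OF v(1), of 0] by (simp add: c_def)
  have si: "(\<Sum>j\<le>n. c j * X j i) = 0" if i: "i < n" for i
  proof -
    have "(transpose_mat (Mx n X) *\<^sub>v v) $ Suc i = 0" using v(3) i by simp
    then show ?thesis using MxT_mult[OF v(1), of "Suc i" X] i by (simp add: c_def mult.commute)
  qed
  have "\<forall>j\<le>n. c j = 0" using nd s0 si unfolding nondeg_simplex_def by blast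
  then have "v = 0\<^sub>v (Suc n)" using v(1) by (intro eq_vecI) (auto simp: c_def less_Suc_eq_le)
  with v(2) show False by simp
qed

lemma nondeg_uniq: assumes nd: "nondeg_simplex n X"
  and h: "\<forall>j\<le>n. a0 + (\<Sum>i<n. a i * X j i) = 0"
  shows "a0 = 0 \<and> (\<forall>i<n. a i = 0)"
proof -
  define w where "w = vec (Suc n) (\<lambda>k. if k = 0 then a0 else a (k - 1))"
  have wc: "w \<in> carrier_vec (Suc n)" by (simp add: w_def)
  have "Mx n X *\<^sub>v w = 0\<^sub>v (Suc n)"
  proof (rule eq_vecI)
    fix j assume "j < dim_vec (0\<^sub>v (Suc n) :: real vec)"
    then have j: "j \<le> n" by simp
    show "(Mx n X *\<^sub>v w) $ j = 0\<^sub>v (Suc n) $ j"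
      using Mx_mult[OF wc j, of X] h j by (simp add: w_def)
  qed (simp add: Mx_def)
  then have "w = 0\<^sub>v (Suc n)"
    using det_0_iff_vec_prod_zero[of "Mx n X" "Suc n"] Mx_carrier nondeg_det[OF nd] wc by blast
  then have "\<forall>k<Suc n. w $ k = 0" by simp
  then show ?thesis by (auto simp: w_def)
qed

lemma nondeg_exists: assumes nd: "nondeg_simplex n X"
  shows "\<exists>a0 a. \<forall>j\<le>n. a0 + (\<Sum>i<n. a i * X j i) = v j"
proof -
  have "Mx n X \<in> Units (ring_mat TYPE(real) (Suc n) ())"
    by (rule det_non_zero_imp_unit[OF Mx_carrier nondeg_det[OF nd]])
  then obtain B where B: "B \<in> carrier_mat (Suc n) (Suc n)" "Mx n X * B = 1\<^sub>m (Suc n)"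
    unfolding Units_def ring_mat_def by auto
  define w where "w = B *\<^sub>v vec (Suc n) v"
  have wc: "w \<in> carrier_vec (Suc n)" using B by (simp add: w_def)
  have "Mx n X *\<^sub>v w = vec (Suc n) v"
    unfolding w_def using B Mx_carrier
    by (subst assoc_mult_mat_vec[symmetric, of _ "Suc n" "Suc n" _ "Suc n"]) auto
  then have "\<forall>j\<le>n. w $ 0 + (\<Sum>i<n. w $ (Suc i) * X j i) = v j"
    using Mx_mult[OF wc] by (metis index_vec less_Suc_eq_le)
  then show ?thesis by (intro exI[of _ "w $ 0"] exI[of _ "\<lambda>i. w $ Suc i"]) simp
qed


definition aff :: "nat \<Rightarrow> real \<Rightarrow> (nat \<Rightarrow> real) \<Rightarrow> (nat \<Rightarrow> real) \<Rightarrow> real" where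
  "aff n c0 c x = c0 + (\<Sum>i<n. c i * x i)"

lemma poly1_aff: "poly1 n (aff n c0 c)"
  unfolding poly1_def aff_def by blast

lemma interp_eq: assumes nd: "nondeg_simplex n X" and p: "poly1 n p"
  and pf: "\<forall>j\<le>n. p (X j) = f (X j)"
  shows "interp n X f = p"
  unfolding interp_def
proof (rule the_equality)
  show "poly1 n p \<and> (\<forall>j\<le>n. p (X j) = f (X j))" using p pf by blast
next
  fix q assume q: "poly1 n q \<and> (\<forall>j\<le>n. q (X j) = f (X j))"
  obtain a0 a where a: "\<forall>x. p x = a0 + (\<Sum>i<n. a i * x i)" using p unfolding poly1_def by blast
  obtain b0 b where b: "\<forall>x. q x = b0 + (\<Sum>i<n. b i * x i)" using q unfolding poly1_def by blast
  have "\<forall>j\<le>n. (b0 - a0) + (\<Sum>i<n. (b i - a i) * X j i) = 0"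
  proof (intro allI impI)
    fix j assume j: "j \<le> n"
    have "q (X j) = p (X j)" using q pf j by simp
    then show "(b0 - a0) + (\<Sum>i<n. (b i - a i) * X j i) = 0"
      using a b by (simp add: algebra_simps sum_subtractf)
  qed
  from nondeg_uniq[OF nd this] have "b0 = a0" "\<forall>i<n. b i = a i" by auto
  then show "q = p" using a b by (auto intro!: sum.cong)
qed

lemma lincomb: "(\<Sum>j\<le>n. a j * aff m (L0 j) (L j) x) = aff m (\<Sum>j\<le>n. a j * L0 j) (\<lambda>i. \<Sum>j\<le>n. a j * L j i) x"
  unfolding aff_def
  by (simp add: algebra_simps sum.distrib sum_distrib_left sum_distrib_right sum.swap[of _ "{..<m}"])

lemma cs_ball: assumes "x \<in> unit_ball n"
  shows "\<bar>\<Sum>i<n. c i * x i\<bar> \<le> L2_set c {..<n}"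
proof -
  have "\<bar>\<Sum>i<n. c i * x i\<bar> \<le> (\<Sum>i<n. \<bar>c i\<bar> * \<bar>x i\<bar>)"
    by (metis (no_types, lifting) abs_mult sum.cong sum_abs)
  also have "\<dots> \<le> L2_set c {..<n} * L2_set x {..<n}" by (rule L2_set_mult_ineq)
  also have "\<dots> \<le> L2_set c {..<n} * 1"
    using assms by (intro mult_left_mono) (auto simp: unit_ball_def enorm_L2 L2_set_nonneg)
  finally show ?thesis by simp
qed

lemma aff_bound: "x \<in> unit_ball n \<Longrightarrow> \<bar>aff n c0 c x\<bar> \<le> \<bar>c0\<bar> + L2_set c {..<n}"
  unfolding aff_def using cs_ball[of x n c] by linarith

lemma cont_aff: "cont_on_ball n (aff n c0 c)"
  unfolding cont_on_ball_def
proof (intro ballI allI impI)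
  fix x e assume x: "x \<in> unit_ball n" and e: "(e::real) > 0"
  define K where "K = L2_set c {..<n} + 1"
  have K: "K > 0" by (simp add: K_def L2_set_nonneg add_nonneg_pos)
  show "\<exists>d>0. \<forall>y\<in>unit_ball n. enorm n (\<lambda>i. y i - x i) < d \<longrightarrow> \<bar>aff n c0 c y - aff n c0 c x\<bar> < e"
  proof (intro exI[of _ "e / K"] conjI ballI impI)
    show "e / K > 0" using e K by simp
    fix y assume "y \<in> unit_ball n" and d: "enorm n (\<lambda>i. y i - x i) < e / K"
    have "aff n c0 c y - aff n c0 c x = (\<Sum>i<n. c i * (y i - x i))"
      by (simp add: aff_def algebra_simps sum_subtractf)
    also have "\<bar>\<dots>\<bar> \<le> (\<Sum>i<n. \<bar>c i\<bar> * \<bar>y i - x i\<bar>)"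
      by (metis (no_types, lifting) abs_mult sum.cong sum_abs)
    also have "\<dots> \<le> L2_set c {..<n} * enorm n (\<lambda>i. y i - x i)"
      unfolding enorm_L2 by (rule L2_set_mult_ineq)
    also have "\<dots> \<le> K * enorm n (\<lambda>i. y i - x i)"
      by (intro mult_right_mono) (auto simp: K_def enorm_def intro: sum_nonneg)
    also have "\<dots> < K * (e / K)" by (rule mult_strict_left_mono) (use d K in auto)
    also have "\<dots> = e" using K by simp
    finally show "\<bar>aff n c0 c y - aff n c0 c x\<bar> < e" .
  qed
qed


lemma cont_clip: assumes "cont_on_ball n g"
  shows "cont_on_ball n (\<lambda>x. max (-1) (min 1 (g x)))"
  unfolding cont_on_ball_def
proof (intro ballI allI impI)
  fix x e assume x: "x \<in> unit_ball n" and e: "(e::real) > 0"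
  obtain d where d: "d > 0" "\<forall>y\<in>unit_ball n. enorm n (\<lambda>i. y i - x i) < d \<longrightarrow> \<bar>g y - g x\<bar> < e"
    using assms x e unfolding cont_on_ball_def by blast
  show "\<exists>d>0. \<forall>y\<in>unit_ball n. enorm n (\<lambda>i. y i - x i) < d \<longrightarrow>
      \<bar>max (-1) (min 1 (g y)) - max (-1) (min 1 (g x))\<bar> < e"
  proof (intro exI[of _ d] conjI ballI impI)
    fix y assume "y \<in> unit_ball n" "enorm n (\<lambda>i. y i - x i) < d"
    then have "\<bar>g y - g x\<bar> < e" using d by blast
    then show "\<bar>max (-1) (min 1 (g y)) - max (-1) (min 1 (g x))\<bar> < e"
      by (simp add: abs_less_iff max_def min_def split: if_splits) linarith?
  qed (use d in simp)
qed

lemma zero_in_ball: "(\<lambda>i. 0) \<in> unit_ball n"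
  by (simp add: ball_iff)

lemma supnorm_le: assumes "\<forall>x\<in>unit_ball n. \<bar>f x\<bar> \<le> K" shows "supnorm n f \<le> K"
  unfolding supnorm_def using assms zero_in_ball by (intro cSup_least) auto

lemma supnorm_ge: assumes "\<forall>x\<in>unit_ball n. \<bar>f x\<bar> \<le> K" "y \<in> unit_ball n"
  shows "\<bar>f y\<bar> \<le> supnorm n f"
  unfolding supnorm_def using assms by (intro cSup_upper) (auto intro!: bdd_aboveI2)

definition PS :: "nat \<Rightarrow> (nat \<Rightarrow> nat \<Rightarrow> real) \<Rightarrow> real set" where
  "PS n X = {supnorm n (interp n X f) | f. cont_on_ball n f \<and> supnorm n f \<le> 1}"

lemma PS_ne: "PS n X \<noteq> {}"
proof -
  have "cont_on_ball n (\<lambda>x. 0)" unfolding cont_on_ball_def by auto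
  moreover have "supnorm n (\<lambda>x. 0) \<le> 1" by (rule supnorm_le) simp
  ultimately show ?thesis unfolding PS_def by blast
qed

lemma proj_bound:
  assumes nd: "nondeg_simplex n X" and inb: "\<forall>j\<le>n. X j \<in> unit_ball n"
  and lag: "\<forall>j\<le>n. \<forall>k\<le>n. aff n (L0 j) (L j) (X k) = (if k = j then 1 else 0)"
  and K: "\<forall>x\<in>unit_ball n. (\<Sum>j\<le>n. \<bar>aff n (L0 j) (L j) x\<bar>) \<le> K"
  shows "\<forall>t\<in>PS n X. t \<le> K"
proof
  fix t assume "t \<in> PS n X"
  then obtain f where f: "cont_on_ball n f" "supnorm n f \<le> 1" and t: "t = supnorm n (interp n X f)"
    unfolding PS_def by blast
  define p where "p = (\<lambda>x. \<Sum>j\<le>n. f (X j) * aff n (L0 j) (L j) x)"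
  have pp: "poly1 n p" unfolding p_def lincomb by (rule poly1_aff)
  have pv: "\<forall>k\<le>n. p (X k) = f (X k)"
  proof (intro allI impI)
    fix k assume k: "k \<le> n"
    have "p (X k) = (\<Sum>j\<le>n. f (X j) * (if k = j then 1 else 0))"
      unfolding p_def using lag k by (intro sum.cong) auto
    also have "\<dots> = f (X k)" using k by (simp add: if_distrib sum.delta cong: if_cong)
    finally show "p (X k) = f (X k)" .
  qed
  have ip: "interp n X f = p" by (rule interp_eq[OF nd pp pv])
  have fb: "\<bar>f (X j)\<bar> \<le> 1" if "j \<le> n" for j
    using cont_le_supnorm[OF f(1) inb[rule_format, OF that]] f(2) by linarith
  have "\<forall>x\<in>unit_ball n. \<bar>p x\<bar> \<le> K"
  proof
    fix x assume x: "x \<in> unit_ball n"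
    have "\<bar>p x\<bar> \<le> (\<Sum>j\<le>n. \<bar>f (X j) * aff n (L0 j) (L j) x\<bar>)"
      unfolding p_def by (rule sum_abs)
    also have "\<dots> \<le> (\<Sum>j\<le>n. \<bar>aff n (L0 j) (L j) x\<bar>)"
      by (intro sum_mono) (auto simp: abs_mult intro!: mult_left_le_one_le fb)
    also have "\<dots> \<le> K" using K x by blast
    finally show "\<bar>p x\<bar> \<le> K" .
  qed
  then show "t \<le> K" unfolding t ip by (rule supnorm_le)
qed

lemma signs: fixes m :: nat and w :: "nat \<Rightarrow> nat \<Rightarrow> real" shows "\<exists>s. (\<forall>j. \<bar>s j\<bar> = (1::real)) \<and>
   (\<Sum>j<m. \<Sum>i<n. (w j i)\<^sup>2) \<le> (\<Sum>i<n. (\<Sum>j<m. s j * w j i)\<^sup>2)"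
proof (induction m)
  case 0
  show ?case by (intro exI[of _ "\<lambda>_. 1"]) simp
next
  case (Suc m)
  then obtain s where s: "\<forall>j. \<bar>s j\<bar> = (1::real)"
    "(\<Sum>j<m. \<Sum>i<n. (w j i)\<^sup>2) \<le> (\<Sum>i<n. (\<Sum>j<m. s j * w j i)\<^sup>2)" by blast
  define V where "V i = (\<Sum>j<m. s j * w j i)" for i
  define \<sigma> where "\<sigma> = (if (\<Sum>i<n. V i * w m i) \<ge> 0 then 1 else (-1::real))"
  define s' where "s' = s(m := \<sigma>)"
  have s'abs: "\<forall>j. \<bar>s' j\<bar> = 1" using s(1) by (simp add: s'_def \<sigma>_def)
  have sum': "(\<Sum>j<Suc m. s' j * w j i) = V i + \<sigma> * w m i" for i
    by (simp add: s'_def V_def)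
  have "0 \<le> \<sigma> * (\<Sum>i<n. V i * w m i)" by (simp add: \<sigma>_def)
  have "(\<Sum>i<n. (V i + \<sigma> * w m i)\<^sup>2) = (\<Sum>i<n. (V i)\<^sup>2) + 2 * (\<sigma> * (\<Sum>i<n. V i * w m i)) + \<sigma>\<^sup>2 * (\<Sum>i<n. (w m i)\<^sup>2)"
    by (simp add: power2_sum sum.distrib sum_distrib_left algebra_simps power_mult_distrib)
  also have "\<sigma>\<^sup>2 = 1" by (simp add: \<sigma>_def)
  finally have "(\<Sum>i<n. (V i + \<sigma> * w m i)\<^sup>2) \<ge> (\<Sum>i<n. (V i)\<^sup>2) + (\<Sum>i<n. (w m i)\<^sup>2)"
    using \<open>0 \<le> \<sigma> * _\<close> by linarith
  then have "(\<Sum>j<Suc m. \<Sum>i<n. (w j i)\<^sup>2) \<le> (\<Sum>i<n. (\<Sum>j<Suc m. s' j * w j i)\<^sup>2)"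
    unfolding sum' using s(2) by (simp add: V_def)
  then show ?case using s'abs by blast
qed


lemma proj_norm_PS: "proj_norm n X = Sup (PS n X)"
  by (simp add: proj_norm_def PS_def)

lemma grad_bound:
  assumes n: "n \<ge> 1" and inb: "\<forall>j\<le>n. X j \<in> unit_ball n"
  and lag: "\<forall>j\<le>n. \<forall>k\<le>n. aff n (L0 j) (L j) (X k) = (if k = j then 1 else 0)"
  and j: "j \<le> n"
  shows "1/4 \<le> (\<Sum>i<n. (L j i)\<^sup>2)"
proof -
  define k where "k = (if j = 0 then 1 else (0::nat))"
  have k: "k \<le> n" "k \<noteq> j" using n by (auto simp: k_def)
  have "aff n (L0 j) (L j) (X j) - aff n (L0 j) (L j) (X k) = 1"
    using lag j k by auto
  then have e: "(\<Sum>i<n. L j i * X j i) - (\<Sum>i<n. L j i * X k i) = 1" by (simp add: aff_def)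
  have "\<bar>\<Sum>i<n. L j i * X j i\<bar> \<le> L2_set (L j) {..<n}" using cs_ball inb j by blast
  moreover have "\<bar>\<Sum>i<n. L j i * X k i\<bar> \<le> L2_set (L j) {..<n}" using cs_ball inb k by blast
  ultimately have "1/2 \<le> L2_set (L j) {..<n}" using e by linarith
  then have "sqrt (1/4) \<le> sqrt (\<Sum>i<n. (L j i)\<^sup>2)"
    by (simp add: L2_set_def real_sqrt_divide)
  then show ?thesis by (simp only: real_sqrt_le_iff)
qed

lemma proj_lower:
  assumes n: "n \<ge> 1" and nd: "nondeg_simplex n X" and inb: "\<forall>j\<le>n. X j \<in> unit_ball n"
  shows "sqrt (real n) / 2 \<le> proj_norm n X"
proof -
  have "\<forall>j. \<exists>a0 a. \<forall>k\<le>n. a0 + (\<Sum>i<n. a i * X k i) = (if k = j then 1 else 0)"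
    by (intro allI nondeg_exists[OF nd])
  then obtain L0 L where L: "\<forall>j. \<forall>k\<le>n. L0 j + (\<Sum>i<n. L j i * X k i) = (if k = j then 1 else 0)"
    by metis
  have lag: "\<forall>j\<le>n. \<forall>k\<le>n. aff n (L0 j) (L j) (X k) = (if k = j then 1 else 0)"
    using L by (simp add: aff_def)
  define K0 where "K0 = (\<Sum>j\<le>n. \<bar>L0 j\<bar> + L2_set (L j) {..<n})"
  have "\<forall>x\<in>unit_ball n. (\<Sum>j\<le>n. \<bar>aff n (L0 j) (L j) x\<bar>) \<le> K0"
    unfolding K0_def by (auto intro!: sum_mono aff_bound)
  from proj_bound[OF nd inb lag this] have bdd: "bdd_above (PS n X)" by (auto intro!: bdd_aboveI2)
  obtain s where s: "\<forall>j. \<bar>s j\<bar> = (1::real)"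
    "(\<Sum>j\<le>n. \<Sum>i<n. (L j i)\<^sup>2) \<le> (\<Sum>i<n. (\<Sum>j\<le>n. s j * L j i)\<^sup>2)"
    using signs[where m="Suc n" and n=n and w=L] by (auto simp: lessThan_Suc_atMost)
  define W where "W i = (\<Sum>j\<le>n. s j * L j i)" for i
  define sqW where "sqW = (\<Sum>i<n. (W i)\<^sup>2)"
  have "(\<Sum>j\<le>n. (1/4::real)) \<le> (\<Sum>j\<le>n. \<Sum>i<n. (L j i)\<^sup>2)"
    by (intro sum_mono grad_bound[OF n inb lag]) auto
  then have sq: "(real n + 1) / 4 \<le> sqW" using s(2) by (simp add: sqW_def W_def)
  define r where "r = sqrt sqW"
  have "sqrt (real n) / 2 = sqrt (real n / 4)" by (simp add: real_sqrt_divide)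
  also have "\<dots> \<le> sqrt sqW" using sq by simp
  finally have rge: "sqrt (real n) / 2 \<le> r" by (simp add: r_def)
  have "(real n + 1) / 4 > 0" by simp
  then have sqpos: "sqW > 0" using sq by linarith
  have rpos: "r > 0" using sqpos by (simp add: r_def)
  have r2: "r * r = sqW" using sqpos by (simp add: r_def)
  define y where "y i = (if i < n then W i / r else 0)" for i
  define ym where "ym i = - y i" for i
  have ysq: "(\<Sum>i<n. (y i)\<^sup>2) = 1"
  proof -
    have "(\<Sum>i<n. (y i)\<^sup>2) = (\<Sum>i<n. (W i)\<^sup>2 / (r * r))"
      by (intro sum.cong) (auto simp: y_def power_divide power2_eq_square)
    also have "\<dots> = sqW / (r * r)" by (simp add: sqW_def sum_divide_distrib)
    finally show ?thesis using r2 sqpos by simp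
  qed
  have yb: "y \<in> unit_ball n" using ysq by (simp add: ball_iff y_def)
  have ymb: "ym \<in> unit_ball n" using ysq by (simp add: ball_iff y_def ym_def)
  define C where "C = (\<Sum>j\<le>n. s j * L0 j)"
  define p where "p = aff n C W"
  have p_eq: "p x = (\<Sum>j\<le>n. s j * aff n (L0 j) (L j) x)" for x
    unfolding lincomb p_def C_def W_def by simp
  have pX: "p (X k) = s k" if k: "k \<le> n" for k
  proof -
    have "p (X k) = (\<Sum>j\<le>n. s j * (if k = j then 1 else 0))"
      unfolding p_eq using lag k by (intro sum.cong) auto
    also have "\<dots> = s k" using k by (simp add: if_distrib sum.delta cong: if_cong)
    finally show ?thesis .
  qed
  have py: "p y = C + r"
  proof -
    have "(\<Sum>i<n. W i * y i) = (\<Sum>i<n. (W i)\<^sup>2 / r)"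
      by (intro sum.cong) (auto simp: y_def power2_eq_square)
    also have "\<dots> = sqW / r" by (simp add: sqW_def sum_divide_distrib)
    also have "\<dots> = r" using r2 rpos by (simp add: field_simps)
    finally show ?thesis by (simp add: p_def aff_def)
  qed
  have pym: "p ym = C - r"
  proof -
    have "(\<Sum>i<n. W i * ym i) = - (\<Sum>i<n. W i * y i)"
      by (simp add: ym_def sum_negf[symmetric])
    then show ?thesis using py by (simp add: p_def aff_def)
  qed
  define f where "f x = max (-1) (min 1 (p x))" for x
  have fc: "cont_on_ball n f" unfolding f_def p_def by (intro cont_clip cont_aff)
  have fs: "supnorm n f \<le> 1" by (rule supnorm_le) (auto simp: f_def)
  have fX: "\<forall>j\<le>n. p (X j) = f (X j)"
  proof (intro allI impI)
    fix j assume j: "j \<le> n"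
    have "s j = 1 \<or> s j = -1" using s(1) by (metis abs_if minus_minus)
    then show "p (X j) = f (X j)" using pX[OF j] by (auto simp: f_def)
  qed
  have ip: "interp n X f = p" by (rule interp_eq[OF nd _ fX]) (simp add: p_def poly1_aff)
  have pb: "\<forall>x\<in>unit_ball n. \<bar>p x\<bar> \<le> \<bar>C\<bar> + L2_set W {..<n}"
    unfolding p_def using aff_bound by blast
  have "r \<le> max \<bar>p y\<bar> \<bar>p ym\<bar>" using py pym rpos by linarith
  also have "\<dots> \<le> supnorm n p" using supnorm_ge[OF pb yb] supnorm_ge[OF pb ymb] by simp
  also have "\<dots> \<le> proj_norm n X"
    unfolding proj_norm_PS
  proof (rule cSup_upper[OF _ bdd])
    show "supnorm n p \<in> PS n X" unfolding PS_def using fc fs ip by force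
  qed
  finally show ?thesis using rge by linarith
qed


definition E :: "nat \<Rightarrow> nat \<Rightarrow> real" where
  "E j i = (if j = Suc i then 1 else 0)"

lemma sum_upto_Suc: "(\<Sum>j\<le>n. g j) = g 0 + (\<Sum>i<n. g (Suc i))"
  by (simp only: lessThan_Suc_atMost[symmetric] sum.lessThan_Suc_shift)

lemma E_sum: "(\<Sum>i<n. E k i * x i) = (if k = 0 then 0 else if k - 1 < n then x (k - 1) else 0)"
proof (cases k)
  case 0 then show ?thesis by (simp add: E_def)
next
  case (Suc m)
  have "(\<Sum>i<n. E k i * x i) = (\<Sum>i<n. if i = m then x i else 0)"
    by (intro sum.cong) (auto simp: E_def Suc)
  then show ?thesis by (simp add: Suc)
qed

lemma E_ball: assumes "j \<le> n" shows "E j \<in> unit_ball n"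
proof -
  have "(\<Sum>i<n. (E j i)\<^sup>2) = (\<Sum>i<n. E j i * 1)"
    by (intro sum.cong) (auto simp: E_def)
  also have "\<dots> \<le> 1" using E_sum[where k=j and x="\<lambda>_. 1" and n=n] by simp
  finally show ?thesis using assms by (auto simp: ball_iff E_def)
qed

lemma E_nondeg: "nondeg_simplex n E"
  unfolding nondeg_simplex_def
proof (intro allI impI)
  fix c :: "nat \<Rightarrow> real" and j
  assume h: "(\<Sum>j\<le>n. c j) = 0 \<and> (\<forall>i<n. (\<Sum>j\<le>n. c j * E j i) = 0)" and j: "j \<le> n"
  have cs: "c (Suc i) = 0" if i: "i < n" for i
  proof -
    have "(\<Sum>j\<le>n. c j * E j i) = (\<Sum>j\<le>n. if j = Suc i then c j else 0)"
      by (intro sum.cong) (auto simp: E_def)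
    also have "\<dots> = c (Suc i)" using i by simp
    finally show ?thesis using h i by simp
  qed
  have "c 0 = 0" using h cs by (simp add: sum_upto_Suc)
  then show "c j = 0" using cs j by (cases j) auto
qed

definition LE0 :: "nat \<Rightarrow> real" where "LE0 j = (if j = 0 then 1 else 0)"
definition LE :: "nat \<Rightarrow> nat \<Rightarrow> real" where
  "LE j i = (if j = 0 then -1 else if j = Suc i then 1 else 0)"

lemma LE_aff0: "aff n (LE0 0) (LE 0) x = 1 - (\<Sum>i<n. x i)"
  by (simp add: aff_def LE0_def LE_def sum_negf)

lemma LE_affS: "m < n \<Longrightarrow> aff n (LE0 (Suc m)) (LE (Suc m)) x = x m"
proof -
  assume m: "m < n"
  have "(\<Sum>i<n. LE (Suc m) i * x i) = (\<Sum>i<n. if i = m then x i else 0)"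
    by (intro sum.cong) (auto simp: LE_def)
  then show ?thesis using m by (simp add: aff_def LE0_def)
qed

lemma E_lag: "\<forall>j\<le>n. \<forall>k\<le>n. aff n (LE0 j) (LE j) (E k) = (if k = j then 1 else 0)"
proof (intro allI impI)
  fix j k assume j: "j \<le> n" and k: "k \<le> n"
  show "aff n (LE0 j) (LE j) (E k) = (if k = j then 1 else 0)"
  proof (cases j)
    case 0
    have "(\<Sum>i<n. E k i) = (\<Sum>i<n. E k i * 1)" by simp
    also have "\<dots> = (if k = 0 then 0 else 1)" using k by (subst E_sum) auto
    finally show ?thesis using 0 by (simp add: LE_aff0)
  next
    case (Suc m)
    then show ?thesis using j by (simp add: LE_affS E_def)
  qed
qed

lemma E_K: assumes n: "n \<ge> 1"
  shows "\<forall>x\<in>unit_ball n. (\<Sum>j\<le>n. \<bar>aff n (LE0 j) (LE j) x\<bar>) \<le> 3 * sqrt (real n)"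
proof
  fix x assume x: "x \<in> unit_ball n"
  have "(\<Sum>j\<le>n. \<bar>aff n (LE0 j) (LE j) x\<bar>) = \<bar>1 - (\<Sum>i<n. x i)\<bar> + (\<Sum>i<n. \<bar>x i\<bar>)"
    by (simp add: sum_upto_Suc LE_aff0 LE_affS)
  also have "\<dots> \<le> 1 + 2 * (\<Sum>i<n. \<bar>x i\<bar>)"
    using sum_abs[of x "{..<n}"] by linarith
  also have "(\<Sum>i<n. \<bar>x i\<bar>) \<le> sqrt (real n)"
  proof -
    have "(\<Sum>i<n. \<bar>x i\<bar>) = (\<Sum>i<n. \<bar>(\<lambda>_. 1::real) i\<bar> * \<bar>x i\<bar>)" by simp
    also have "\<dots> \<le> L2_set (\<lambda>_. 1::real) {..<n} * L2_set x {..<n}" by (rule L2_set_mult_ineq)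
    also have "\<dots> \<le> sqrt (real n) * 1"
    proof -
      have a: "L2_set (\<lambda>_. 1::real) {..<n} = sqrt (real n)" by (simp add: L2_set_def)
      have b: "L2_set x {..<n} \<le> 1" using x by (simp add: unit_ball_def enorm_L2)
      show ?thesis unfolding a by (rule mult_left_mono[OF b]) simp
    qed
    finally show ?thesis by simp
  qed
  then have "1 + 2 * (\<Sum>i<n. \<bar>x i\<bar>) \<le> 1 + 2 * sqrt (real n)" by simp
  also have "\<dots> \<le> 3 * sqrt (real n)" using n by simp
  finally show "(\<Sum>j\<le>n. \<bar>aff n (LE0 j) (LE j) x\<bar>) \<le> 3 * sqrt (real n)" by simp
qed

lemma theta_bounds:
  assumes n: "n \<ge> 1"
  shows "1/2 * sqrt (real n) \<le> theta n \<and> theta n \<le> 3 * sqrt (real n)"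
proof -
  define T where "T = {proj_norm n X | X. (\<forall>j\<le>n. X j \<in> unit_ball n) \<and> nondeg_simplex n X}"
  have th: "theta n = Inf T" by (simp add: theta_def T_def)
  have ET: "proj_norm n E \<in> T" unfolding T_def using E_ball E_nondeg by blast
  have low: "\<forall>t\<in>T. sqrt (real n) / 2 \<le> t" unfolding T_def using proj_lower[OF n] by blast
  have "sqrt (real n) / 2 \<le> Inf T" using ET low by (intro cInf_greatest) auto
  then have G1: "1/2 * sqrt (real n) \<le> theta n" by (simp add: th)
  have bb: "bdd_below T" unfolding bdd_below_def using low by blast
  have G2: "Inf T \<le> proj_norm n E" using ET bb by (rule cInf_lower)
  have inb: "\<forall>j\<le>n. E j \<in> unit_ball n" using E_ball by blast
  have "\<forall>t\<in>PS n E. t \<le> 3 * sqrt (real n)"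
    by (rule proj_bound[OF E_nondeg inb E_lag E_K[OF n]])
  then have "Sup (PS n E) \<le> 3 * sqrt (real n)"
    using PS_ne by (intro cSup_least) auto
  then have G3: "proj_norm n E \<le> 3 * sqrt (real n)" by (simp add: proj_norm_PS)
  show ?thesis using G1 G2 G3 th by simp
qed

theorem corollary4:
  shows "\<exists>c1 c2 :: real. c1 > 0 \<and> c2 > 0 \<and>
           (\<forall>n::nat. n \<ge> 1 \<longrightarrow> c1 * sqrt (real n) \<le> theta n \<and> theta n \<le> c2 * sqrt (real n))"
proof -
  have "(1/2::real) > 0 \<and> (3::real) > 0 \<and>
      (\<forall>n::nat. n \<ge> 1 \<longrightarrow> 1/2 * sqrt (real n) \<le> theta n \<and> theta n \<le> 3 * sqrt (real n))"
    using theta_bounds by simp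
  then show ?thesis by blast
qed

end
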